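(* Let $\beta\ge 2$ and $t\ge 0$ be integers, and let $G$ be a cactus with $2\beta$ vertices, exactly $t$ cycles, a perfect matching, and minimum degree $\delta(G)\ge 2$. Then $$SO(G)<\Phi(\beta,t)=(\beta+t-1)\sqrt{(\beta+t)^{2}+4}+\sqrt{(\beta+t)^{2}+1}+\sqrt{5}\,(\beta-t-1)+2\sqrt{2}\,t.$$
   Context: All graphs are finite, simple and connected. For a graph $G$, $d_u$ denotes the degree of vertex $u$, $\delta(G)$ the minimum degree, and the Sombor index is $SO(G)=\sum_{uv\in E(G)}\sqrt{d_u^2+d_v^2}$. A cactus is a connected graph in which any two cycles have at most one common vertex. *)

theory Defs
  imports Complex_Main
begin

definition simple_graph :: "'a set \<Rightarrow> 'a set set \<Rightarrow> bool" where
  "simple_graph V E \<longleftrightarrow> finite V \<and> (\<forall>e\<in>E. e \<subseteq> V \<and> card e = 2)"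

definition adjacent :: "'a set set \<Rightarrow> 'a \<Rightarrow> 'a \<Rightarrow> bool" where
  "adjacent E u v \<longleftrightarrow> {u, v} \<in> E"

definition connected_graph :: "'a set \<Rightarrow> 'a set set \<Rightarrow> bool" where
  "connected_graph V E \<longleftrightarrow> V \<noteq> {} \<and> (\<forall>u\<in>V. \<forall>v\<in>V. (adjacent E)\<^sup>*\<^sup>* u v)"

definition degree :: "'a set set \<Rightarrow> 'a \<Rightarrow> nat" where
  "degree E v = card {e\<in>E. v \<in> e}"

definition min_degree :: "'a set \<Rightarrow> 'a set set \<Rightarrow> nat" where
  "min_degree V E = Min (degree E ` V)"

definition is_cycle :: "'a set \<Rightarrow> 'a set set \<Rightarrow> 'a set set \<Rightarrow> bool" where
  "is_cycle V E C \<longleftrightarrow> (\<exists>vs. length vs \<ge> 3 \<and> distinct vs \<and> set vs \<subseteq> V \<and>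
      C = {{vs ! i, vs ! ((i + 1) mod length vs)} | i. i < length vs} \<and> C \<subseteq> E)"

definition cycles :: "'a set \<Rightarrow> 'a set set \<Rightarrow> 'a set set set" where
  "cycles V E = {C. is_cycle V E C}"

definition cactus :: "'a set \<Rightarrow> 'a set set \<Rightarrow> bool" where
  "cactus V E \<longleftrightarrow> connected_graph V E \<and>
     (\<forall>C1\<in>cycles V E. \<forall>C2\<in>cycles V E. C1 \<noteq> C2 \<longrightarrow> card (\<Union>C1 \<inter> \<Union>C2) \<le> 1)"

definition perfect_matching :: "'a set \<Rightarrow> 'a set set \<Rightarrow> 'a set set \<Rightarrow> bool" where
  "perfect_matching V E M \<longleftrightarrow> M \<subseteq> E \<and> (\<forall>v\<in>V. \<exists>!e. e \<in> M \<and> v \<in> e)"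

definition has_perfect_matching :: "'a set \<Rightarrow> 'a set set \<Rightarrow> bool" where
  "has_perfect_matching V E \<longleftrightarrow> (\<exists>M. perfect_matching V E M)"

definition sombor :: "'a set set \<Rightarrow> real" where
  "sombor E = (\<Sum>e\<in>E. sqrt (\<Sum>u\<in>e. (real (degree E u))\<^sup>2))"

definition Phi :: "nat \<Rightarrow> nat \<Rightarrow> real" where
  "Phi \<beta> t = (real \<beta> + real t - 1) * sqrt ((real \<beta> + real t)\<^sup>2 + 4)
     + sqrt ((real \<beta> + real t)\<^sup>2 + 1) + sqrt 5 * (real \<beta> - real t - 1) + 2 * sqrt 2 * real t"

end

theory Submission
  imports Defs
begin

fun pth :: "'a set set \<Rightarrow> 'a list \<Rightarrow> bool" where
  "pth E [] = True"
| "pth E [x] = True"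
| "pth E (x # y # ys) = ({x, y} \<in> E \<and> pth E (y # ys))"

lemma pth_nth: "pth E xs \<Longrightarrow> i + 1 < length xs \<Longrightarrow> {xs ! i, xs ! (i+1)} \<in> E"
proof (induction E xs arbitrary: i rule: pth.induct)
  case (3 E x y ys)
  show ?case
  proof (cases i)
    case 0
    then show ?thesis using 3(2) by simp
  next
    case (Suc j)
    have "j + 1 < length (y # ys)" using 3(3) Suc by simp
    moreover have "pth E (y # ys)" using 3(2) by simp
    ultimately have "{(y # ys) ! j, (y # ys) ! (j + 1)} \<in> E" using 3(1) by blast
    then show ?thesis using Suc by simp
  qed
qed simp_all

lemma sg_finite: "simple_graph V E \<Longrightarrow> finite E"
proof -
  assume "simple_graph V E"
  then have "E \<subseteq> Pow V" "finite V" unfolding simple_graph_def by auto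
  then show "finite E" using finite_subset by blast
qed

lemma cyc_sub: "C \<in> cycles V E \<Longrightarrow> C \<subseteq> E"
  unfolding cycles_def is_cycle_def by (elim CollectE exE conjE)
lemma cycles_mono: "V' \<subseteq> V \<Longrightarrow> E' \<subseteq> E \<Longrightarrow> cycles V' E' \<subseteq> cycles V E"
proof
  fix C assume a: "V' \<subseteq> V" "E' \<subseteq> E" "C \<in> cycles V' E'"
  then obtain vs where "length vs \<ge> 3" "distinct vs" "set vs \<subseteq> V'"
      "C = {{vs ! i, vs ! ((i + 1) mod length vs)} | i. i < length vs}" "C \<subseteq> E'"
    unfolding cycles_def is_cycle_def by (elim CollectE exE conjE) 
  then show "C \<in> cycles V E" unfolding cycles_def is_cycle_def using a
    by (intro CollectI exI[of _ vs] conjI) auto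
qed

lemma cycles_finite: "simple_graph V E \<Longrightarrow> finite (cycles V E)"
proof -
  assume a: "simple_graph V E"
  have "cycles V E \<subseteq> Pow E" using cyc_sub by blast
  moreover have "finite (Pow E)" using sg_finite[OF a] by simp
  ultimately show ?thesis by (rule finite_subset)
qed

lemma exists_cycle:
  assumes sg: "simple_graph V E" and ne: "V \<noteq> {}" and deg: "\<forall>v\<in>V. degree E v \<ge> 2"
  shows "\<exists>C e. C \<in> cycles V E \<and> e \<in> C"
proof -
  define P where "P = (\<lambda>xs. pth E xs \<and> distinct xs \<and> set xs \<subseteq> V)"
  have fV: "finite V" using sg simple_graph_def by auto
  have bnd: "\<forall>y. P y \<longrightarrow> length y \<le> card V"
    unfolding P_def using fV by (metis card_mono distinct_card)
  obtain v where v: "v \<in> V" using ne by auto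
  have "card {e\<in>E. v \<in> e} \<ge> 2" using deg v degree_def by metis
  then obtain e0 where e0: "e0 \<in> E" "v \<in> e0"
    by (metis (no_types, lifting) Collect_empty_eq card.empty not_numeral_le_zero)
  then obtain a b where ab: "e0 = {a,b}" "a \<noteq> b" using sg unfolding simple_graph_def
    by (meson card_2_iff)
  have abV: "a \<in> V" "b \<in> V" using sg e0 ab unfolding simple_graph_def by auto
  have "P [a,b]" unfolding P_def using ab e0 abV by auto
  moreover have "\<forall>y. P y \<longrightarrow> length y < card V + 1" using bnd by auto
  ultimately have "\<exists>xs. P xs \<and> (\<forall>y. P y \<longrightarrow> length y \<le> length xs)"
    by (rule ex_has_greatest_nat)
  then obtain xs where xs: "P xs" and mx: "\<forall>y. P y \<longrightarrow> length y \<le> length xs"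
    by blast
  have "length xs \<ge> 2" using mx[rule_format, OF \<open>P [a,b]\<close>] by simp
  then obtain x y ys where xsd: "xs = x # y # ys"
    by (metis Suc_le_length_iff numeral_2_eq_2)
  have xV: "x \<in> V" and xyE: "{x,y} \<in> E" using xs xsd P_def by auto
  have "card {e\<in>E. x \<in> e} \<ge> 2" using deg xV degree_def by metis
  then have "\<not> {e\<in>E. x \<in> e} \<subseteq> {{x,y}}"
  proof (intro notI)
    assume "{e\<in>E. x \<in> e} \<subseteq> {{x,y}}"
    then have "card {e\<in>E. x \<in> e} \<le> card {{x,y}}" by (intro card_mono) auto
    then show False using \<open>card {e\<in>E. x \<in> e} \<ge> 2\<close> by simp
  qed
  then obtain e' where e': "e' \<in> E" "x \<in> e'" "e' \<noteq> {x,y}" by blast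
  then obtain c d where cd: "e' = {c,d}" "c \<noteq> d" using sg unfolding simple_graph_def
    by (meson card_2_iff)
  obtain w where w: "e' = {x, w}" "w \<noteq> x" using cd e' by auto
  have wV: "w \<in> V" using sg e' w unfolding simple_graph_def by auto
  have wy: "w \<noteq> y" using w e' by auto
  have "w \<in> set xs"
  proof (rule ccontr)
    assume "w \<notin> set xs"
    have wx: "{w,x} \<in> E" using e' w by (simp add: insert_commute)
    have "P (w # xs)" using xs wV wx \<open>w \<notin> set xs\<close> unfolding P_def xsd by simp
    from mx[rule_format, OF this] show False by simp
  qed
  then obtain i where i: "i < length xs" "xs ! i = w" by (meson in_set_conv_nth)
  have i2: "i \<ge> 2"
  proof (rule ccontr)
    assume "\<not> 2 \<le> i"
    then have "i = 0 \<or> i = 1" by auto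
    then show False using i w wy xsd by auto
  qed
  define vs where "vs = take (i+1) xs"
  have lvs: "length vs = i + 1" using i vs_def by auto
  define C where "C = {{vs ! j, vs ! ((j + 1) mod length vs)} | j. j < length vs}"
  have CE: "C \<subseteq> E"
  proof
    fix f assume "f \<in> C"
    then obtain j where j: "j < i + 1" "f = {vs ! j, vs ! ((j + 1) mod (i+1))}"
      using C_def lvs by auto
    show "f \<in> E"
    proof (cases "j < i")
      case True
      then have "(j+1) mod (i+1) = j + 1" by auto
      then have "f = {xs ! j, xs ! (j+1)}" using j True vs_def by auto
      then show ?thesis using pth_nth[of E xs j] xs P_def True i by auto
    next
      case False
      then have "j = i" using j by auto
      then have "f = {xs ! i, xs ! 0}" using j vs_def by auto
      then show ?thesis using i w e' xsd by (auto simp: insert_commute)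
    qed
  qed
  have d1: "3 \<le> length vs" using lvs i2 by simp
  have d2: "distinct vs" using xs unfolding P_def vs_def by simp
  have d3: "set vs \<subseteq> V" using xs set_take_subset[of "i+1" xs] unfolding P_def vs_def by blast
  have "is_cycle V E C"
    unfolding is_cycle_def
    apply (rule exI[of _ vs])
    apply (intro conjI d1 d2 d3 C_def CE)
    done
  moreover have "{vs ! 0, vs ! ((0 + 1) mod length vs)} \<in> C"
    unfolding C_def mem_Collect_eq
    apply (rule exI[of _ 0])
    using lvs by simp
  ultimately show ?thesis unfolding cycles_def mem_Collect_eq by (intro exI conjI)
qed


lemma edge_bound:
  "simple_graph V E \<Longrightarrow> V \<noteq> {} \<Longrightarrow> card E + 1 \<le> card V + card (cycles V E)"
proof (induction "card V + card E" arbitrary: V E rule: less_induct)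
  case less
  have sg: "simple_graph V E" and ne: "V \<noteq> {}" by fact+
  have fV: "finite V" using sg simple_graph_def by auto
  have fE: "finite E" using sg_finite[OF sg] .
  have fC: "finite (cycles V E)" using cycles_finite[OF sg] .
  show ?case
  proof (cases "\<exists>v\<in>V. degree E v \<le> 1")
    case True
    then obtain v where v: "v \<in> V" "degree E v \<le> 1" by blast
    show ?thesis
    proof (cases "V = {v}")
      case True
      have "E = {}"
      proof (rule ccontr)
        assume "E \<noteq> {}"
        then obtain e where "e \<in> E" by blast
        then have "e \<subseteq> {v}" "card e = 2" using sg True unfolding simple_graph_def by auto
        then have "card e \<le> card {v}" by (intro card_mono) simp_all
        then have "card e \<le> 1" by simp
        then show False using \<open>card e = 2\<close> by simp
      qed
      then show ?thesis using True by simp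
    next
      case False
      define V' where "V' = V - {v}"
      define E' where "E' = {e\<in>E. v \<notin> e}"
      have ne': "V' \<noteq> {}" using False v V'_def by auto
      have sg': "simple_graph V' E'" using sg unfolding simple_graph_def V'_def E'_def by auto
      have c1: "card V' = card V - 1" using v by (simp add: V'_def card_Diff_singleton)
      have c2: "card V > 0" using v fV card_gt_0_iff by blast
      have cV: "card V = card V' + 1" using c1 c2 by linarith
      have "E \<subseteq> E' \<union> {e\<in>E. v \<in> e}" using E'_def by auto
      then have "card E \<le> card (E' \<union> {e\<in>E. v \<in> e})" using fE E'_def by (intro card_mono) auto
      also have "\<dots> \<le> card E' + card {e\<in>E. v \<in> e}" by (rule card_Un_le)
      finally have cE0: "card E \<le> card E' + card {e\<in>E. v \<in> e}" .
      have "card {e\<in>E. v \<in> e} \<le> 1" using v(2) unfolding degree_def .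
      then have cE: "card E \<le> card E' + 1" using cE0 by linarith
      have "card E' \<le> card E" using fE E'_def by (intro card_mono) auto
      then have "card V' + card E' < card V + card E" using cV by simp
      then have IH: "card E' + 1 \<le> card V' + card (cycles V' E')" using less(1) sg' ne' by blast
      have "cycles V' E' \<subseteq> cycles V E" by (rule cycles_mono) (auto simp: V'_def E'_def)
      then have "card (cycles V' E') \<le> card (cycles V E)" using fC by (rule card_mono[rotated])
      then show ?thesis using IH cV cE by simp
    qed
  next
    case False
    then have deg: "\<forall>v\<in>V. degree E v \<ge> 2" by auto
    obtain C e where Ce: "C \<in> cycles V E" "e \<in> C" using exists_cycle[OF sg ne deg] by blast
    have eE: "e \<in> E" using Ce cyc_sub by blast
    define E' where "E' = E - {e}"
    have sg': "simple_graph V E'" using sg unfolding simple_graph_def E'_def by auto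
    have c1: "card E' = card E - 1" using eE by (simp add: E'_def card_Diff_singleton)
    have c2: "card E > 0" using eE fE card_gt_0_iff by blast
    have cE: "card E = card E' + 1" using c1 c2 by linarith
    then have "card V + card E' < card V + card E" by simp
    then have IH: "card E' + 1 \<le> card V + card (cycles V E')" using less(1) sg' ne by blast
    have "cycles V E' \<subseteq> cycles V E - {C}"
    proof
      fix D assume D: "D \<in> cycles V E'"
      have "D \<in> cycles V E" using D cycles_mono[of V V E' E] E'_def by blast
      moreover have "D \<noteq> C" using D cyc_sub Ce E'_def by blast
      ultimately show "D \<in> cycles V E - {C}" by blast
    qed
    then have "card (cycles V E') \<le> card (cycles V E - {C})" using fC by (intro card_mono) auto
    also have "\<dots> = card (cycles V E) - 1" using Ce fC by simp
    finally have cc: "card (cycles V E') \<le> card (cycles V E) - 1" .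
    have "cycles V E \<noteq> {}" using Ce by blast
    then have "card (cycles V E) > 0" using fC by (simp add: card_gt_0_iff)
    then have "card (cycles V E') + 1 \<le> card (cycles V E)" using cc by linarith
    then show ?thesis using IH cE by simp
  qed
qed

lemma sqrt2_bounds: "(1414/1000) \<le> sqrt (2::real)" "sqrt (2::real) \<le> (14143/10000)"
  by (rule real_le_rsqrt, simp add: power2_eq_square, rule real_le_lsqrt, simp_all add: power2_eq_square)

lemma sqrt5_bounds: "(2236/1000) \<le> sqrt (5::real)" "sqrt (5::real) \<le> (22361/10000)"
  by (rule real_le_rsqrt, simp add: power2_eq_square, rule real_le_lsqrt, simp_all add: power2_eq_square)

lemma edge_ineq:
  fixes a b :: real
  assumes "a \<ge> 2" "b \<ge> 2"
  shows "sqrt (a\<^sup>2 + b\<^sup>2) \<le> (sqrt (a\<^sup>2 + 4) - sqrt 2) + (sqrt (b\<^sup>2 + 4) - sqrt 2)"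
proof -
  define A where "A = sqrt (a\<^sup>2 + 4)"
  define B where "B = sqrt (b\<^sup>2 + 4)"
  define r where "r = sqrt (2::real)"
  have r2: "r\<^sup>2 = 2" "r \<ge> 0" using r_def by simp_all
  have A2: "A\<^sup>2 = a\<^sup>2 + 4" using A_def by simp
  have B2: "B\<^sup>2 = b\<^sup>2 + 4" using B_def by simp
  have "a\<^sup>2 \<ge> 2\<^sup>2" using assms by (intro power_mono) auto
  then have "(2 * r)\<^sup>2 \<le> a\<^sup>2 + 4" using r2 by (simp add: power_mult_distrib)
  then have Ar: "2 * r \<le> A" unfolding A_def by (rule real_le_rsqrt)
  have "b\<^sup>2 \<ge> 2\<^sup>2" using assms by (intro power_mono) auto
  then have "(2 * r)\<^sup>2 \<le> b\<^sup>2 + 4" using r2 by (simp add: power_mult_distrib)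
  then have Br: "2 * r \<le> B" unfolding B_def by (rule real_le_rsqrt)
  have p: "(A - 2*r) * (B - 2*r) \<ge> 0" using Ar Br by simp
  have "a\<^sup>2 + b\<^sup>2 \<le> (A + B - 2 * r)\<^sup>2"
  proof -
    have "(A + B - 2 * r)\<^sup>2 = A\<^sup>2 + B\<^sup>2 + 4 * r\<^sup>2 + 2*A*B - 4*r*A - 4*r*B"
      by (simp add: power2_eq_square algebra_simps)
    also have "\<dots> = a\<^sup>2 + b\<^sup>2 + 2 * ((A - 2*r) * (B - 2*r))"
      using A2 B2 r2 by (simp add: algebra_simps power2_eq_square)
    finally show ?thesis using p by simp
  qed
  then have "sqrt (a\<^sup>2 + b\<^sup>2) \<le> A + B - 2 * r"
    using Ar Br r2 by (intro real_le_lsqrt) auto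
  then show ?thesis unfolding A_def B_def r_def by simp
qed

lemma vertex_ineq:
  fixes d \<beta> :: nat
  assumes "2 \<le> d" "real d \<le> 2 * real \<beta> - 1" "\<beta> \<ge> 2"
  shows "real d * (sqrt ((real d)\<^sup>2 + 4) - sqrt 2) \<le> 2 * sqrt 2 + (real d - 2) * (2 * real \<beta>)"
proof (cases "d = 2")
  case True
  have s4: "sqrt (4::real) = 2" by (rule real_sqrt_unique) auto
  have "sqrt (8::real) = sqrt (4 * 2)" by simp
  also have "\<dots> = sqrt 4 * sqrt 2" by (rule real_sqrt_mult)
  finally have "sqrt (8::real) = 2 * sqrt 2" using s4 by simp
  then show ?thesis using True s4 by simp
next
  case False
  define x where "x = real d"
  have x3: "x \<ge> 3" using assms False x_def by simp
  have "x * sqrt (x\<^sup>2 + 4) \<le> x\<^sup>2 + 2"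
  proof (rule power2_le_imp_le)
    have "(x * sqrt (x\<^sup>2 + 4))\<^sup>2 = x\<^sup>2 * (x\<^sup>2 + 4)" by (simp add: power_mult_distrib)
    also have "\<dots> \<le> (x\<^sup>2 + 2)\<^sup>2" by (simp add: power2_eq_square algebra_simps)
    finally show "(x * sqrt (x\<^sup>2 + 4))\<^sup>2 \<le> (x\<^sup>2 + 2)\<^sup>2" .
  qed simp
  moreover have "x\<^sup>2 + 2 - sqrt 2 * x \<le> 2 * sqrt 2 + (x - 2) * (2 * real \<beta>)"
  proof -
    define s where "s = sqrt (2::real)"
    define b where "b = real \<beta>"
    have sb: "(1414/1000) \<le> s" "s \<le> (14143/10000)" using sqrt2_bounds s_def by auto
    have xb: "x \<le> 2 * b - 1" "b \<ge> 2" using assms x_def b_def by auto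
    have h1: "(x - 3) * (2 * b - 1 - x) \<ge> 0" using x3 xb by simp
    have h2: "(2 - s) * (2 * b - 1 - x) \<ge> 0" using sb xb by simp
    have h3: "(5 * s - 7) * (b - 2) \<ge> 0" using sb xb by simp
    have e1: "(x - 3) * (2 * b - 1 - x) = 2*(x*b) - x\<^sup>2 + 2*x - 6*b + 3"
      by (simp add: algebra_simps power2_eq_square)
    have e2: "(2 - s) * (2 * b - 1 - x) = 4*b - 2 - 2*x - 2*(s*b) + s + s*x"
      by (simp add: algebra_simps)
    have e3: "(5 * s - 7) * (b - 2) = 5*(s*b) - 10*s - 7*b + 14"
      by (simp add: algebra_simps)
    have e4: "(x - 2) * (2 * b) = 2*(x*b) - 4*b" by (simp add: algebra_simps)
    have e5: "s * x = x * s" by simp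
    have "x\<^sup>2 + 2 - s * x \<le> 2 * s + (x - 2) * (2 * b)"
      using h1 h2 h3 e1 e2 e3 e4 sb xb by linarith
    then show ?thesis unfolding s_def b_def .
  qed
  ultimately show ?thesis unfolding x_def[symmetric] by (simp add: algebra_simps)
qed

lemma final_ineq:
  fixes \<beta> t :: nat
  assumes "\<beta> \<ge> 2"
  shows "4 * sqrt 2 * real \<beta> + 2 * real \<beta> * (2 * real t - 2) < Phi \<beta> t"
proof -
  define x where "x = real \<beta> + real t"
  have x0: "x \<ge> 2" using assms x_def by simp
  have s1: "sqrt (x\<^sup>2 + 4) \<ge> x" by (rule real_le_rsqrt) simp
  have s2: "sqrt (x\<^sup>2 + 1) \<ge> x" by (rule real_le_rsqrt) simp
  have "(x - 1) * sqrt (x\<^sup>2 + 4) \<ge> (x - 1) * x" using s1 x0 by (intro mult_left_mono) auto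
  then have P: "Phi \<beta> t \<ge> x\<^sup>2 + sqrt 5 * (real \<beta> - real t - 1) + 2 * sqrt 2 * real t"
    unfolding Phi_def x_def[symmetric] using s2 by (simp add: power2_eq_square algebra_simps)
  have key: "x\<^sup>2 + sqrt 5 * (real \<beta> - real t - 1) + 2 * sqrt 2 * real t
       > 4 * sqrt 2 * real \<beta> + 2 * real \<beta> * (2 * real t - 2)"
  proof -
    define s where "s = sqrt (2::real)"
    define q where "q = sqrt (5::real)"
    define b where "b = real \<beta>"
    define u where "u = real t"
    have sb: "(1414/1000) \<le> s" "s \<le> (14143/10000)" using sqrt2_bounds s_def by auto
    have qb: "(2236/1000) \<le> q" "q \<le> (22361/10000)" using sqrt5_bounds q_def by auto
    have b2: "b \<ge> 2" "u \<ge> 0" using assms b_def u_def by auto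
    have e: "x\<^sup>2 + q * (b - u - 1) + 2 * s * u - (4 * s * b + 2 * b * (2 * u - 2))
        = (b - u)\<^sup>2 + 4*b - 4*(s*b) + q*b + 2*(s*u) - q*u - q"
      unfolding x_def b_def u_def by (simp add: algebra_simps power2_eq_square)
    have m1: "s*b \<le> (14143/10000)*b" using sb b2 by (intro mult_right_mono) auto
    have m2: "q*b \<ge> (2236/1000)*b" using qb b2 by (intro mult_right_mono) auto
    have m3: "s*u \<ge> (1414/1000)*u" using sb b2 by (intro mult_right_mono) auto
    have m4: "q*u \<le> (22361/10000)*u" using qb b2 by (intro mult_right_mono) auto
    have "(b - u)\<^sup>2 + 4*b - 4*(s*b) + q*b + 2*(s*u) - q*u - q > 0"
    proof (cases "t \<le> 1")
      case True
      then have "u = 0 \<or> u = 1" using u_def by auto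
      moreover have bb: "b * b - 2 * b \<ge> 0" using b2 mult_right_mono[of 2 b b] by simp
      moreover {
        assume u: "u = 0"
        have "(b - u)\<^sup>2 = b * b" "s * u = 0" "q * u = 0" using u by (simp_all add: power2_eq_square)
        then have ?thesis using m1 m2 b2 qb sb bb by linarith }
      moreover {
        assume u: "u = 1"
        have "(b - u)\<^sup>2 = b * b - 2 * b + 1" "s * u = s" "q * u = q" using u
          by (simp_all add: power2_eq_square algebra_simps)
        then have ?thesis using m1 m2 b2 qb sb bb by linarith }
      ultimately show ?thesis by blast
    next
      case False
      then have "u \<ge> 2" using u_def by simp
      moreover have "(b - u)\<^sup>2 \<ge> 0" by simp
      ultimately show ?thesis using m1 m2 m3 m4 b2 qb by linarith
    qed
    then show ?thesis using e unfolding s_def q_def b_def u_def by linarith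
  qed
  show ?thesis using P key by linarith
qed


lemma double_count:
  fixes f :: "'a \<Rightarrow> real"
  assumes fV: "finite V" and fE: "finite E" and sub: "\<forall>e\<in>E. e \<subseteq> V"
  shows "(\<Sum>e\<in>E. \<Sum>u\<in>e. f u) = (\<Sum>v\<in>V. real (degree E v) * f v)"
proof -
  have "(\<Sum>e\<in>E. \<Sum>u\<in>e. f u) = (\<Sum>e\<in>E. \<Sum>u\<in>V. if u \<in> e then f u else 0)"
  proof (rule sum.cong)
    fix e assume "e \<in> E"
    then have "V \<inter> e = e" using sub by auto
    then show "(\<Sum>u\<in>e. f u) = (\<Sum>u\<in>V. if u \<in> e then f u else 0)"
      using sum.inter_restrict[OF fV, of f e] by simp
  qed simp
  also have "\<dots> = (\<Sum>u\<in>V. \<Sum>e\<in>E. if u \<in> e then f u else 0)" by (rule sum.swap)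
  also have "\<dots> = (\<Sum>v\<in>V. real (degree E v) * f v)"
  proof (rule sum.cong)
    fix u assume "u \<in> V"
    have "(\<Sum>e\<in>E. if u \<in> e then f u else 0) = (\<Sum>e\<in>{e\<in>E. u \<in> e}. f u)"
      using sum.inter_filter[OF fE, of "\<lambda>e. f u" "\<lambda>e. u \<in> e"] by simp
    also have "\<dots> = real (degree E u) * f u" by (simp add: degree_def)
    finally show "(\<Sum>e\<in>E. if u \<in> e then f u else 0) = real (degree E u) * f u" .
  qed simp
  finally show ?thesis .
qed

lemma degree_le:
  assumes sg: "simple_graph V E" and v: "v \<in> V"
  shows "degree E v \<le> card V - 1"
proof -
  have fV: "finite V" using sg simple_graph_def by auto
  have "{e\<in>E. v \<in> e} \<subseteq> (\<lambda>w. {v, w}) ` (V - {v})"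
  proof
    fix e assume e: "e \<in> {e\<in>E. v \<in> e}"
    then have "e \<subseteq> V" "card e = 2" "v \<in> e" using sg unfolding simple_graph_def by auto
    then obtain a b where ab: "e = {a, b}" "a \<noteq> b" by (meson card_2_iff)
    then obtain w where "e = {v, w}" "w \<noteq> v" using \<open>v \<in> e\<close> by auto
    moreover then have "w \<in> V" using \<open>e \<subseteq> V\<close> by auto
    ultimately show "e \<in> (\<lambda>w. {v, w}) ` (V - {v})" by blast
  qed
  then have "card {e\<in>E. v \<in> e} \<le> card ((\<lambda>w. {v, w}) ` (V - {v}))"
    using fV by (intro card_mono) auto
  also have "\<dots> \<le> card (V - {v})" using fV by (intro card_image_le) auto
  also have "\<dots> = card V - 1" using v by (simp add: card_Diff_singleton)
  finally show ?thesis unfolding degree_def .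
qed

theorem lemma4p1:
  fixes V :: "'a set" and E :: "'a set set" and \<beta> t :: nat
  assumes "simple_graph V E"
    and "cactus V E"
    and "\<beta> \<ge> 2"
    and "card V = 2 * \<beta>"
    and "card (cycles V E) = t"
    and "has_perfect_matching V E"
    and "min_degree V E \<ge> 2"
  shows "sombor E < Phi \<beta> t"
proof -
  have sg: "simple_graph V E" by fact
  have fV: "finite V" using sg simple_graph_def by auto
  have fE: "finite E" using sg_finite[OF sg] .
  have sub: "\<forall>e\<in>E. e \<subseteq> V" and c2: "\<forall>e\<in>E. card e = 2" using sg unfolding simple_graph_def by auto
  have ne: "V \<noteq> {}" using assms(3,4) by auto
  define D where "D = (\<lambda>v. real (degree E v))"
  have deg2: "\<forall>v\<in>V. degree E v \<ge> 2"
  proof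
    fix v assume "v \<in> V"
    then have "Min (degree E ` V) \<le> degree E v" using fV by (intro Min_le) auto
    then show "degree E v \<ge> 2" using assms(7) unfolding min_degree_def by simp
  qed
  have degN: "\<forall>v\<in>V. real (degree E v) \<le> 2 * real \<beta> - 1"
  proof
    fix v assume "v \<in> V"
    then have "degree E v \<le> card V - 1" using degree_le[OF sg] by blast
    then show "real (degree E v) \<le> 2 * real \<beta> - 1" using assms(3,4) by simp
  qed
  have eb: "card E + 1 \<le> card V + t" using edge_bound[OF sg ne] assms(5) by simp
  define g where "g = (\<lambda>a::real. sqrt (a\<^sup>2 + 4) - sqrt 2)"
  have step1: "sombor E \<le> (\<Sum>e\<in>E. \<Sum>u\<in>e. g (D u))"
    unfolding sombor_def
  proof (rule sum_mono)
    fix e assume e: "e \<in> E"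
    then obtain a b where ab: "e = {a, b}" "a \<noteq> b" using c2 by (meson card_2_iff)
    have "a \<in> V" "b \<in> V" using e ab sub by auto
    then have "D a \<ge> 2" "D b \<ge> 2" using deg2 D_def by auto
    then have "sqrt ((D a)\<^sup>2 + (D b)\<^sup>2) \<le> g (D a) + g (D b)" unfolding g_def by (rule edge_ineq)
    then show "sqrt (\<Sum>u\<in>e. (real (degree E u))\<^sup>2) \<le> (\<Sum>u\<in>e. g (D u))"
      using ab by (simp add: D_def)
  qed
  also have "\<dots> = (\<Sum>v\<in>V. D v * g (D v))"
    using double_count[OF fV fE sub, of "\<lambda>u. g (D u)"] by (simp add: D_def)
  also have "\<dots> \<le> (\<Sum>v\<in>V. 2 * sqrt 2 + (D v - 2) * (2 * real \<beta>))"
  proof (rule sum_mono)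
    fix v assume v: "v \<in> V"
    show "D v * g (D v) \<le> 2 * sqrt 2 + (D v - 2) * (2 * real \<beta>)"
      using vertex_ineq[of "degree E v" \<beta>] deg2 degN v assms(3) unfolding D_def g_def by auto
  qed
  also have "\<dots> = real (card V) * (2 * sqrt 2) + (2 * real \<beta>) * ((\<Sum>v\<in>V. D v) - 2 * real (card V))"
    by (simp add: sum.distrib sum_subtractf sum_distrib_left sum_distrib_right algebra_simps)
  also have "(\<Sum>v\<in>V. D v) = 2 * real (card E)"
  proof -
    have "(\<Sum>v\<in>V. D v) = (\<Sum>e\<in>E. \<Sum>u\<in>e. (1::real))"
      using double_count[OF fV fE sub, of "\<lambda>u. 1"] by (simp add: D_def)
    also have "\<dots> = (\<Sum>e\<in>E. 2)" using c2 by simp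
    finally show ?thesis by simp
  qed
  finally have so: "sombor E \<le> real (card V) * (2 * sqrt 2) + 2 * real \<beta> * (2 * real (card E) - 2 * real (card V))" .
  have "real (card E) \<le> 2 * real \<beta> + real t - 1" using eb assms(4) by linarith
  then have "2 * real (card E) - 2 * real (card V) \<le> 2 * real t - 2" using assms(4) by simp
  then have "2 * real \<beta> * (2 * real (card E) - 2 * real (card V)) \<le> 2 * real \<beta> * (2 * real t - 2)"
    by (intro mult_left_mono) auto
  then have "sombor E \<le> 4 * sqrt 2 * real \<beta> + 2 * real \<beta> * (2 * real t - 2)"
    using so assms(4) by (simp add: algebra_simps)
  also have "\<dots> < Phi \<beta> t" by (rule final_ineq) (use assms(3) in simp)
  finally show ?thesis .
qed

end
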